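(* Let $\alpha\in\mathbb N$ and $n\ge 0$. The inverse of the matrix $$\left(\frac{1}{\alpha\binom{\alpha+i+j}{\alpha}}\right)_{0\le i,j\le n}$$ has integer entries. *)

theory Defs
  imports "Jordan_Normal_Form.Matrix"
begin

definition hilb_alpha :: "nat \<Rightarrow> nat \<Rightarrow> rat mat" where
  "hilb_alpha \<alpha> n = mat (n+1) (n+1)
     (\<lambda>(i,j). 1 / (of_nat \<alpha> * of_nat ((\<alpha> + i + j) choose \<alpha>)))"

end

theory Submission
  imports Defs "HOL-Computational_Algebra.Polynomial" "Jordan_Normal_Form.Determinant"
begin


definition DD :: "nat \<Rightarrow> (nat \<Rightarrow> rat) \<Rightarrow> rat" where
  "DD k g = (\<Sum>j\<le>k. (-1)^j * of_nat (k choose j) * g j)"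

lemma DD_0[simp]: "DD 0 g = g 0" by (simp add: DD_def)

lemma DD_add: "DD k (\<lambda>j. f j + g j) = DD k f + DD k g"
  by (simp add: DD_def sum.distrib algebra_simps)
lemma DD_diff: "DD k (\<lambda>j. f j - g j) = DD k f - DD k g"
  by (simp add: DD_def sum_subtractf algebra_simps)
lemma DD_cmult: "DD k (\<lambda>j. r * f j) = r * DD k f"
  by (simp add: DD_def sum_distrib_left algebra_simps)
lemma DD_zero: "DD k (\<lambda>j. 0) = 0"
  by (simp add: DD_def)

lemma DD_Suc: "DD (Suc k) g = DD k g - DD k (\<lambda>j. g (Suc j))"
proof -
  have "DD (Suc k) g = g 0 + (\<Sum>j\<le>k. (-1)^(Suc j) * of_nat (Suc k choose Suc j) * g (Suc j))"
    unfolding DD_def by (subst sum.atMost_Suc_shift) simp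
  also have "\<dots> = g 0 + (\<Sum>j\<le>k. (-1)^(Suc j) * of_nat (k choose Suc j) * g (Suc j))
       - DD k (\<lambda>j. g (Suc j))"
  proof -
    have "\<And>j. (-1)^(Suc j) * of_nat (Suc k choose Suc j) * g (Suc j) = (-1)^(Suc j) * of_nat (k choose Suc j) * g (Suc j) - (-1)^j * of_nat (k choose j) * g (Suc j :: nat)"
      by (simp add: algebra_simps)
    then show ?thesis unfolding DD_def by (simp add: sum_subtractf)
  qed
  also have "g 0 + (\<Sum>j\<le>k. (-1)^(Suc j) * of_nat (k choose Suc j) * g (Suc j)) = DD k g"
  proof -
    have "DD k g = (\<Sum>j\<le>Suc k. (-1)^j * of_nat (k choose j) * g j)"
      unfolding DD_def by simp
    also have "\<dots> = g 0 + (\<Sum>j\<le>k. (-1)^(Suc j) * of_nat (k choose Suc j) * g (Suc j))"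
      by (subst sum.atMost_Suc_shift) simp
    finally show ?thesis by simp
  qed
  finally show ?thesis .
qed

lemma degree_shift_diff:
  fixes p :: "rat poly"
  assumes "degree p > 0"
  shows "degree (p - pcompose p [:1,1:]) < degree p"
proof -
  let ?q = "pcompose p [:1,1:]"
  have d: "degree ?q = degree p" by (simp add: degree_pcompose)
  have l: "lead_coeff ?q = lead_coeff p" by (simp add: lead_coeff_comp)
  have "degree (p - ?q) \<le> degree p - 1"
  proof (rule degree_le, intro allI impI)
    fix i assume "degree p - 1 < i"
    then have "i = degree p \<or> i > degree p" by auto
    then show "coeff (p - ?q) i = 0"
    proof
      assume "i = degree p" then show ?thesis using d l by simp
    next
      assume "i > degree p" then show ?thesis using d by (simp add: coeff_eq_0)
    qed
  qed
  then show ?thesis using assms by simp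
qed

lemma DD_poly: "degree p < k \<Longrightarrow> DD k (\<lambda>j. poly p (of_nat j)) = 0"
proof (induction k arbitrary: p)
  case 0 then show ?case by simp
next
  case (Suc k)
  have e: "DD (Suc k) (\<lambda>j. poly p (of_nat j)) = DD k (\<lambda>j. poly (p - pcompose p [:1,1:]) (of_nat j))"
    by (simp add: DD_Suc DD_diff poly_pcompose algebra_simps)
  show ?case
  proof (cases "degree p = 0")
    case True
    then obtain c where "p = [:c:]" by (metis degree_eq_zeroE)
    then have "p - pcompose p [:1,1:] = 0" by simp
    then show ?thesis using e by (simp add: DD_zero)
  next
    case False
    then have "degree (p - pcompose p [:1,1:]) < k" using degree_shift_diff[of p] Suc.prems by simp
    then show ?thesis using e Suc.IH[of "p - pcompose p [:1,1:]"] by simp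
  qed
qed

lemma DD_recip: "DD k (\<lambda>j. 1 / (of_nat j + of_nat b + 1)) = fact k * fact b / fact (b + k + 1)"
proof (induction k arbitrary: b)
  case 0
  have "fact (b + 0 + 1) = (of_nat b + 1) * (fact b :: rat)" by simp
  moreover have "(fact b :: rat) \<noteq> 0" by simp
  ultimately have "fact (0::nat) * fact b / fact (b + 0 + 1) = (1::rat) / (of_nat b + 1)"
    by (simp del: of_nat_Suc)
  then show ?case by (simp add: add.commute)
next
  case (Suc k)
  have "DD (Suc k) (\<lambda>j. 1 / (of_nat j + of_nat b + 1)) =
     DD k (\<lambda>j. 1 / (of_nat j + of_nat b + 1)) - DD k (\<lambda>j. 1 / (of_nat j + of_nat (Suc b) + 1))"
    by (simp add: DD_Suc add_ac)
  also have "\<dots> = fact k * fact b / fact (b + k + 1) - fact k * fact (Suc b) / fact (Suc b + k + 1)"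
    unfolding Suc.IH by simp
  also have "\<dots> = fact (Suc k) * fact b / fact (b + Suc k + 1)"
  proof -
    have f1: "fact (b + Suc k + 1) = (of_nat b + of_nat k + 2) * (fact (b + k + 1) :: rat)"
      by (simp add: fact_Suc[of "b+k+1"] add_ac)
    have f2: "fact (Suc b + k + 1) = (of_nat b + of_nat k + 2) * (fact (b + k + 1) :: rat)"
      by (simp add: fact_Suc[of "b+k+1"] add_ac)
    have f3: "fact (Suc b) = (of_nat b + 1) * (fact b :: rat)" by (simp add: fact_Suc)
    have f4: "fact (Suc k) = (of_nat k + 1) * (fact k :: rat)" by (simp add: fact_Suc)
    have p: "(fact (b + k + 1) :: rat) \<noteq> 0" "(of_nat b + of_nat k + 2 :: rat) \<noteq> 0" by simp_all
    have aux: "\<And>(x::rat) y F B K. F \<noteq> 0 \<Longrightarrow> B + K + 2 \<noteq> 0 \<Longrightarrow>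
       x * y / F - x * ((B + 1) * y) / ((B + K + 2) * F) = (K + 1) * x * y / ((B + K + 2) * F)"
    proof -
      fix x y F B K :: rat assume a1: "F \<noteq> 0" and a2: "B + K + 2 \<noteq> 0"
      have "x * y / F = x * y * (B + K + 2) / ((B + K + 2) * F)" using a1 a2 by simp
      then have "x * y / F - x * ((B + 1) * y) / ((B + K + 2) * F) = (x * y * (B + K + 2) - x * ((B + 1) * y)) / ((B + K + 2) * F)"
        by (simp add: diff_divide_distrib)
      also have "x * y * (B + K + 2) - x * ((B + 1) * y) = (K + 1) * x * y" by (simp add: algebra_simps)
      finally show "x * y / F - x * ((B + 1) * y) / ((B + K + 2) * F) = (K + 1) * x * y / ((B + K + 2) * F)" .
    qed
    show ?thesis unfolding f1 f2 f3 f4 by (rule aux[OF p])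
  qed
  finally show ?case .
qed

lemma DD_poly_frac:
  fixes N :: "rat poly" and c :: rat
  assumes "degree N \<le> k" "c > 0"
  shows "DD k (\<lambda>j. poly N (of_nat j) / (of_nat j + c)) = poly N (-c) * DD k (\<lambda>j. 1 / (of_nat j + c))"
proof -
  let ?q = "synthetic_div N (-c)"
  have eq: "[:c, 1:] * ?q + [:poly N (-c):] = N" using synthetic_div_correct'[of "-c" N] by simp
  have pt: "poly N x = (x + c) * poly ?q x + poly N (-c)" for x
    by (subst eq[symmetric]) (simp add: algebra_simps)
  have pos: "of_nat j + c \<noteq> 0" for j :: nat using assms(2)
    by (metis add_pos_nonneg less_numeral_extra(3) of_nat_0_le_iff add.commute)
  have pos': "c + of_nat j \<noteq> 0" for j :: nat using pos[of j] by (simp add: add.commute)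
  have "DD k (\<lambda>j. poly N (of_nat j) / (of_nat j + c)) =
        DD k (\<lambda>j. poly ?q (of_nat j) + poly N (-c) * (1 / (of_nat j + c)))"
    unfolding DD_def by (intro sum.cong refl) (simp add: pt[of "of_nat _"] pos pos' field_simps)
  also have "\<dots> = DD k (\<lambda>j. poly ?q (of_nat j)) + poly N (-c) * DD k (\<lambda>j. 1 / (of_nat j + c))"
    by (simp only: DD_add DD_cmult)
  also have "DD k (\<lambda>j. poly ?q (of_nat j)) = 0"
  proof (cases k)
    case 0
    then have "degree N = 0" using assms by simp
    then obtain c0 where "N = [:c0:]" by (metis degree_eq_zeroE)
    then have "?q = 0" by simp
    then show ?thesis by (simp add: DD_zero)
  next
    case (Suc k')
    then show ?thesis using assms by (intro DD_poly) (simp add: degree_synthetic_div)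
  qed
  finally show ?thesis by simp
qed



definition cc :: "nat \<Rightarrow> nat \<Rightarrow> nat \<Rightarrow> rat" where
  "cc a k j = (-1)^j * of_nat (k choose j) * of_nat ((k+j+a) choose j)"
definition hh :: "nat \<Rightarrow> nat \<Rightarrow> nat \<Rightarrow> rat" where
  "hh a j m = 1 / (of_nat (Suc a) * of_nat ((Suc a + j + m) choose Suc a))"
definition NN :: "nat \<Rightarrow> nat \<Rightarrow> nat \<Rightarrow> rat poly" where
  "NN a k m = (\<Prod>t\<in>{1..m}. [:of_nat t,1:]) * (\<Prod>t\<in>{1..k-m}. [:of_nat (m+a+1+t),1:])"

lemma prod_fact0: "fact n * (\<Prod>t\<in>{1..d}. (of_nat n + of_nat t :: rat)) = fact (n+d)"
proof (induction d)
  case 0 then show ?case by simp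
next
  case (Suc d)
  have "fact n * (\<Prod>t\<in>{1..Suc d}. (of_nat n + of_nat t :: rat)) = (fact n * (\<Prod>t\<in>{1..d}. (of_nat n + of_nat t :: rat))) * (of_nat n + of_nat (Suc d))"
    by (simp add: atLeastAtMostSuc_conv mult_ac)
  also have "\<dots> = fact (n+d) * of_nat (Suc (n+d))" using Suc.IH by simp
  also have "\<dots> = fact (n + Suc d)" by (simp add: mult.commute)
  finally show ?case .
qed

lemma prod_fact: "(\<Prod>t\<in>{1..d}. (of_nat n + of_nat t :: rat)) = fact (n+d) / fact n"
  using prod_fact0[of n d] by (simp add: field_simps)

lemma degree_NN: "degree (NN a k m) \<le> k" if "m \<le> k"
proof -
  have "degree (NN a k m) \<le> degree (\<Prod>t\<in>{1..m}. [:of_nat t,1:] :: rat poly) + degree (\<Prod>t\<in>{1..k-m}. [:of_nat (m+a+1+t),1:] :: rat poly)"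
    unfolding NN_def by (rule degree_mult_le)
  also have "\<dots> \<le> (\<Sum>t\<in>{1..m}. 1) + (\<Sum>t\<in>{1..k-m}. 1)"
    by (intro add_mono order.trans[OF degree_prod_sum_le]) (auto simp: o_def)
  finally show ?thesis using that by simp
qed

lemma poly_NN: "m \<le> k \<Longrightarrow> poly (NN a k m) (of_nat j) = fact (j+m) / fact j * (fact (j+k+a+1) / fact (j+m+a+1))"
proof -
  assume mk: "m \<le> k"
  have 1: "(\<Prod>t\<in>{1..m}. poly [:of_nat t,1:] (of_nat j)) = fact (j+m) / (fact j :: rat)"
    using prod_fact[of j m] by (simp add: add.commute)
  have 2: "(\<Prod>t\<in>{1..k-m}. poly [:of_nat (m+a+1+t),1:] (of_nat j)) = fact (j+k+a+1) / (fact (j+m+a+1) :: rat)"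
  proof -
    have "(\<Prod>t\<in>{1..k-m}. poly [:of_nat (m+a+1+t),1:] (of_nat j)) = (\<Prod>t\<in>{1..k-m}. (of_nat (j+m+a+1) + of_nat t :: rat))"
      by (intro prod.cong refl) (simp add: algebra_simps)
    also have "\<dots> = fact (j+m+a+1 + (k-m)) / fact (j+m+a+1)" by (rule prod_fact)
    also have "j+m+a+1 + (k-m) = j+k+a+1" using mk by simp
    finally show ?thesis .
  qed
  show ?thesis unfolding NN_def poly_mult poly_prod 1 2 ..
qed

lemma term_eq:
  assumes "m \<le> k"
  shows "of_nat ((k+j+a) choose j) * hh a j m = fact a / fact (k+a) * (poly (NN a k m) (of_nat j) / (of_nat j + of_nat (k+a+1)))"
proof -
  have b1: "of_nat ((k+j+a) choose j) = (fact (k+j+a) / (fact j * fact (k+a)) :: rat)"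
    by (subst binomial_fact) (auto simp: add_ac)
  have b2: "of_nat ((Suc a + j + m) choose Suc a) = (fact (Suc a + j + m) / (fact (Suc a) * fact (j+m)) :: rat)"
    by (subst binomial_fact) (auto simp: add_ac)
  have f1: "fact (Suc a) = of_nat (Suc a) * (fact a :: rat)" by simp
  have f2: "fact (j+k+a+1) = of_nat (j+k+a+1) * (fact (k+j+a) :: rat)"
    by (simp add: add_ac)
  have f3: "fact (Suc a + j + m) = (fact (j+m+a+1) :: rat)" by (simp add: add_ac)
  have w: "of_nat j + of_nat (k+a+1) = (of_nat (j+k+a+1) :: rat)" by simp
  have aux: "\<And>P Q R S T U A W :: rat. Q\<noteq>0 \<Longrightarrow> R\<noteq>0 \<Longrightarrow> S\<noteq>0 \<Longrightarrow> T\<noteq>0 \<Longrightarrow> U\<noteq>0 \<Longrightarrow> A\<noteq>0 \<Longrightarrow> W\<noteq>0 \<Longrightarrow>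
     P/(Q*R) * (1/(A*(U/(A*S*T)))) = S/R * (T/Q * (W*P/U) / W)"
    by (simp add: field_simps)
  show ?thesis unfolding hh_def poly_NN[OF assms] b1 b2 f1 f2 f3 w
    by (rule aux) (simp_all del: of_nat_add of_nat_Suc)

qed



lemma X_eq:
  assumes "m \<le> k"
  shows "(\<Sum>j\<le>k. cc a k j * hh a j m) = fact a / fact (k+a) * poly (NN a k m) (- of_nat (k+a+1)) * (fact k * fact (k+a) / fact (k+a+k+1))"
proof -
  have "(\<Sum>j\<le>k. cc a k j * hh a j m) = (\<Sum>j\<le>k. (-1)^j * of_nat (k choose j) * (of_nat ((k+j+a) choose j) * hh a j m))"
    unfolding cc_def by (simp add: mult.assoc)
  also have "\<dots> = fact a / fact (k+a) * DD k (\<lambda>j. poly (NN a k m) (of_nat j) / (of_nat j + of_nat (k+a+1)))"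
    unfolding term_eq[OF assms] DD_def by (simp add: sum_distrib_left algebra_simps)
  also have "DD k (\<lambda>j. poly (NN a k m) (of_nat j) / (of_nat j + of_nat (k+a+1))) =
     poly (NN a k m) (- of_nat (k+a+1)) * DD k (\<lambda>j. 1 / (of_nat j + of_nat (k+a+1)))"
    by (rule DD_poly_frac) (use degree_NN[OF assms] in auto)
  also have "DD k (\<lambda>j. 1 / (of_nat j + of_nat (k+a+1))) = fact k * fact (k+a) / fact (k+a+k+1)"
    using DD_recip[of k "k+a"] by (simp add: add_ac)
  finally show ?thesis by simp
qed

lemma X_lt:
  assumes "m < k"
  shows "(\<Sum>j\<le>k. cc a k j * hh a j m) = 0"
proof -
  have "poly (NN a k m) (- of_nat (k+a+1)) = 0"
  proof -
    have "k - m \<in> {1..k-m}" using assms by simp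
    moreover have "poly [:of_nat (m+a+1+(k-m)),1:] (- of_nat (k+a+1) :: rat) = 0"
      using assms by simp
    ultimately have "(\<Prod>t\<in>{1..k-m}. poly [:of_nat (m+a+1+t),1:] (- of_nat (k+a+1) :: rat)) = 0"
      by (meson finite_atLeastAtMost prod_zero)
    then show ?thesis unfolding NN_def poly_mult poly_prod by simp
  qed
  then show ?thesis using X_eq[of m k a] assms by simp
qed

lemma prod_rev_neg: "(\<Prod>t\<in>{1..k}. poly [:of_nat t,1:] (- of_nat (k+a+1) :: rat)) = (-1)^k * (fact (k+a) / fact a)"
proof -
  have "(\<Prod>t\<in>{1..k}. poly [:of_nat t,1:] (- of_nat (k+a+1) :: rat)) = (\<Prod>t\<in>{1..k}. poly [:of_nat (k + 1 - t),1:] (- of_nat (k+a+1) :: rat))"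
    by (subst prod.atLeastAtMost_rev) simp
  also have "\<dots> = (\<Prod>t\<in>{1..k}. (-1) * (of_nat a + of_nat t :: rat))"
  proof (intro prod.cong refl)
    fix t assume "t \<in> {1..k}"
    then have "of_nat (k + 1 - t) = (of_nat k + 1 - of_nat t :: rat)" by (simp add: of_nat_diff)
    then show "poly [:of_nat (k + 1 - t),1:] (- of_nat (k+a+1) :: rat) = (-1) * (of_nat a + of_nat t)"
      by simp
  qed
  also have "\<dots> = (\<Prod>t\<in>{1..k}. (-1::rat)) * (\<Prod>t\<in>{1..k}. (of_nat a + of_nat t :: rat))"
    by (rule prod.distrib)
  also have "\<dots> = (-1)^k * (fact (a+k) / fact a)"
    by (simp only: prod_constant prod_fact card_atLeastAtMost) simp
  finally show ?thesis by (simp add: add.commute)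
qed

lemma X_diag: "cc a k k * (\<Sum>j\<le>k. cc a k j * hh a j k) = 1 / of_nat (2*k+a+1)"
proof -
  have N: "poly (NN a k k) (- of_nat (k+a+1)) = (-1)^k * (fact (k+a) / fact a)"
    unfolding NN_def poly_mult poly_prod using prod_rev_neg by simp
  have bf: "of_nat ((k+k+a) choose k) = (fact (k+k+a) / (fact k * fact (k+a)) :: rat)"
  proof -
    have "of_nat ((k+k+a) choose k) = (fact (k+k+a) / (fact k * fact (k+k+a-k)) :: rat)"
      by (rule binomial_fact) simp
    also have "k+k+a-k = k+a" by simp
    finally show ?thesis .
  qed
  have c: "cc a k k = (-1)^k * (fact (k+k+a) / (fact k * fact (k+a)))"
    unfolding cc_def bf by simp
  have f: "fact (k+a+k+1) = of_nat (2*k+a+1) * (fact (k+k+a) :: rat)"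
  proof -
    have e: "k+a+k+1 = Suc (k+k+a)" by simp
    have "fact (k+a+k+1) = of_nat (Suc (k+k+a)) * (fact (k+k+a) :: rat)" unfolding e by (rule fact_Suc)
    also have "Suc (k+k+a) = 2*k+a+1" by simp
    finally show ?thesis .
  qed
  define A where "A = (fact a :: rat)"
  define K where "K = (fact (k+a) :: rat)"
  define F where "F = (fact k :: rat)"
  define G where "G = (fact (k+k+a) :: rat)"
  define q where "q = (of_nat (2*k+a+1) :: rat)"
  define s where "s = ((-1)^k :: rat)"
  have nz: "A \<noteq> 0" "K \<noteq> 0" "F \<noteq> 0" "G \<noteq> 0" "q \<noteq> 0" unfolding A_def K_def F_def G_def q_def
    by (simp_all only: fact_nonzero of_nat_eq_0_iff) simp_all
  have ss: "s * s = 1" unfolding s_def by (simp flip: power_add)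
  have "cc a k k * (\<Sum>j\<le>k. cc a k j * hh a j k) = (s * (G / (F * K))) * (A / K * (s * (K / A)) * (F * K / (q * G)))"
    unfolding X_eq[OF order.refl] N c f A_def K_def F_def G_def q_def s_def by (rule refl)
  also have "\<dots> = (s * s) / q" using nz by (simp add: field_simps)
  finally show ?thesis using ss unfolding q_def by simp
qed



lemma cc_zero: "k < j \<Longrightarrow> cc a k j = 0" by (simp add: cc_def)

lemma cc_Ints: "cc a k j \<in> \<int>" unfolding cc_def by (intro Ints_mult Ints_power Ints_minus Ints_1 Ints_of_nat)

lemma mult_Ints:
  assumes "A \<in> carrier_mat nr n" "B \<in> carrier_mat n nc"
    and "\<forall>i<nr. \<forall>j<n. A $$ (i,j) \<in> (\<int> :: rat set)" "\<forall>i<n. \<forall>j<nc. B $$ (i,j) \<in> \<int>"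
  shows "\<forall>i<nr. \<forall>j<nc. (A * B) $$ (i,j) \<in> \<int>"
  using assms by (auto simp: scalar_prod_def intro!: Ints_sum Ints_mult)

context
  fixes a n :: nat
begin

definition "Cm = mat (n+1) (n+1) (\<lambda>(k,j). cc a k j)"
definition "Dm = mat (n+1) (n+1) (\<lambda>(k,l). if k = l then (of_nat (2*k+a+1) :: rat) else 0)"
definition "Hm = hilb_alpha (Suc a) n"
definition "Mm = Cm * Hm * transpose_mat Cm"

lemma carriers: "Cm \<in> carrier_mat (n+1) (n+1)" "Dm \<in> carrier_mat (n+1) (n+1)" "Hm \<in> carrier_mat (n+1) (n+1)"
  "Mm \<in> carrier_mat (n+1) (n+1)"
  by (auto simp: Cm_def Dm_def Hm_def hilb_alpha_def Mm_def)

lemma Hm_idx: "i < n+1 \<Longrightarrow> j < n+1 \<Longrightarrow> Hm $$ (i,j) = hh a i j"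
  by (simp add: Hm_def hilb_alpha_def hh_def)

lemma CH_idx:
  assumes "k < n+1" "m < n+1"
  shows "(Cm * Hm) $$ (k,m) = (\<Sum>j\<le>k. cc a k j * hh a j m)"
proof -
  have "(Cm * Hm) $$ (k,m) = (\<Sum>j\<in>{0..<n+1}. cc a k j * hh a j m)"
    using assms carriers by (simp add: scalar_prod_def Cm_def Hm_idx)
  also have "\<dots> = (\<Sum>j\<le>k. cc a k j * hh a j m)"
    using assms by (intro sum.mono_neutral_right) (auto simp: cc_zero)
  finally show ?thesis .
qed

lemma Mm_idx_le:
  assumes "k < n+1" "l \<le> k"
  shows "Mm $$ (k,l) = (if k = l then 1 / of_nat (2*k+a+1) else 0)"
proof -
  have "Mm $$ (k,l) = (\<Sum>m\<in>{0..<n+1}. (Cm * Hm) $$ (k,m) * cc a l m)"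
    using assms carriers unfolding Mm_def by (simp add: scalar_prod_def Cm_def)
  also have "\<dots> = (\<Sum>m\<in>{0..<n+1}. if m = k then (if k = l then 1 / of_nat (2*k+a+1) else 0) else 0)"
  proof (intro sum.cong refl)
    fix m assume m: "m \<in> {0..<n+1}"
    show "(Cm * Hm) $$ (k,m) * cc a l m = (if m = k then (if k = l then 1 / of_nat (2*k+a+1) else 0) else 0)"
    proof (cases "l < m")
      case True then show ?thesis using assms by (auto simp: cc_zero)
    next
      case False
      then have "m \<le> k" using assms by simp
      show ?thesis
      proof (cases "m < k")
        case True then show ?thesis using m assms by (simp add: CH_idx X_lt)
      next
        case False
        then have "m = k" "l = k" using \<open>m \<le> k\<close> \<open>\<not> l < m\<close> assms by auto
        then show ?thesis using assms X_diag[of a k] by (simp add: CH_idx mult.commute)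
      qed
    qed
  qed
  also have "\<dots> = (if k = l then 1 / of_nat (2*k+a+1) else 0)"
    using assms by (simp add: sum.delta)
  finally show ?thesis .
qed

lemma Hm_sym: "transpose_mat Hm = Hm"
  by (rule eq_matI) (auto simp: Hm_def hilb_alpha_def add_ac)

lemma Mm_sym: "transpose_mat Mm = Mm"
proof -
  have "transpose_mat Mm = transpose_mat (transpose_mat Cm) * transpose_mat (Cm * Hm)"
    unfolding Mm_def using carriers by (intro transpose_mult) auto
  also have "\<dots> = Cm * (transpose_mat Hm * transpose_mat Cm)"
    using carriers by (simp add: transpose_mult)
  also have "\<dots> = Mm" unfolding Mm_def Hm_sym using carriers
    by (metis assoc_mult_mat carrier_matD(1) carrier_matD(2) carrier_mat_triv transpose_carrier_mat)
  finally show ?thesis .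
qed

lemma Mm_idx:
  assumes "k < n+1" "l < n+1"
  shows "Mm $$ (k,l) = (if k = l then 1 / of_nat (2*k+a+1) else 0)"
proof (cases "l \<le> k")
  case True then show ?thesis using assms Mm_idx_le by simp
next
  case False
  have "Mm $$ (k,l) = transpose_mat Mm $$ (k,l)" by (simp add: Mm_sym)
  also have "\<dots> = Mm $$ (l,k)" using assms carriers by simp
  also have "\<dots> = 0" using False assms Mm_idx_le[of l k] by simp
  finally show ?thesis using False by simp
qed

lemma MD: "Mm * Dm = 1\<^sub>m (n+1)"
proof (rule eq_matI)
  fix i j assume ij: "i < dim_row (1\<^sub>m (n+1) :: rat mat)" "j < dim_col (1\<^sub>m (n+1) :: rat mat)"
  then have "(Mm * Dm) $$ (i,j) = (\<Sum>t\<in>{0..<n+1}. Mm $$ (i,t) * Dm $$ (t,j))"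
    using carriers by (simp add: scalar_prod_def)
  also have "\<dots> = (\<Sum>t\<in>{0..<n+1}. if t = i then (if i = j then 1 else 0) else 0)"
    using ij by (intro sum.cong refl) (auto simp: Mm_idx Dm_def simp del: of_nat_add of_nat_mult)
  also have "\<dots> = 1\<^sub>m (n+1) $$ (i,j)" using ij by (simp add: sum.delta)
  finally show "(Mm * Dm) $$ (i,j) = 1\<^sub>m (n+1) $$ (i,j)" .
qed (use carriers in auto)

end


theorem theorem4p2:
  fixes \<alpha> n :: nat
  assumes "\<alpha> \<ge> 1"
  shows "\<exists>B \<in> carrier_mat (n+1) (n+1).
           inverts_mat (hilb_alpha \<alpha> n) B \<and> inverts_mat B (hilb_alpha \<alpha> n) \<and>
           (\<forall>i < n+1. \<forall>j < n+1. B $$ (i,j) \<in> \<int>)"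
proof -
  obtain a where a: "\<alpha> = Suc a" using assms by (cases \<alpha>) auto
  let ?C = "Cm a n" and ?D = "Dm a n" and ?H = "Hm a n" and ?M = "Mm a n"
  note cr = carriers[of a n]
  define B where "B = transpose_mat ?C * ?D * ?C"
  have Bc: "B \<in> carrier_mat (n+1) (n+1)" unfolding B_def using cr by auto
  have "?C * (?H * (transpose_mat ?C * ?D)) = ?M * ?D"
  proof -
    have t: "transpose_mat ?C \<in> carrier_mat (n+1) (n+1)" using cr by simp
    have "?M * ?D = ?C * ?H * transpose_mat ?C * ?D" unfolding Mm_def ..
    also have "\<dots> = ?C * (?H * transpose_mat ?C) * ?D" using cr t by (subst assoc_mult_mat[of ?C _ "n+1" ?H _ "transpose_mat ?C"]) auto
    also have "\<dots> = ?C * ((?H * transpose_mat ?C) * ?D)" using cr t by (intro assoc_mult_mat[of _ _ "n+1"]) auto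
    also have "\<dots> = ?C * (?H * (transpose_mat ?C * ?D))" using cr t by (subst assoc_mult_mat[of ?H _ "n+1"]) auto
    finally show ?thesis by simp
  qed
  also have "\<dots> = 1\<^sub>m (n+1)" by (rule MD)
  finally have "(?H * (transpose_mat ?C * ?D)) * ?C = 1\<^sub>m (n+1)"
    using cr by (intro mat_mult_left_right_inverse[of ?C "n+1"]) auto
  moreover have "(?H * (transpose_mat ?C * ?D)) * ?C = ?H * B"
    unfolding B_def using cr by (intro assoc_mult_mat[of _ _ "n+1"]) auto
  ultimately have HB: "?H * B = 1\<^sub>m (n+1)" by simp
  then have BH: "B * ?H = 1\<^sub>m (n+1)" using cr Bc by (intro mat_mult_left_right_inverse[of ?H "n+1" B]) auto
  have HH: "hilb_alpha \<alpha> n = ?H" unfolding Hm_def a ..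
  have CI: "\<forall>i<n+1. \<forall>j<n+1. ?C $$ (i,j) \<in> \<int>" by (simp add: Cm_def cc_Ints)
  have CTI: "\<forall>i<n+1. \<forall>j<n+1. transpose_mat ?C $$ (i,j) \<in> \<int>" using cr by (simp add: Cm_def cc_Ints)
  have DI: "\<forall>i<n+1. \<forall>j<n+1. ?D $$ (i,j) \<in> \<int>" by (simp add: Dm_def)
  have BI: "\<forall>i<n+1. \<forall>j<n+1. B $$ (i,j) \<in> \<int>" unfolding B_def
    by (rule mult_Ints[OF _ _ mult_Ints[OF _ _ CTI DI] CI]) (use cr in auto)
  show ?thesis
    by (intro bexI[OF _ Bc] conjI BI) (use HB BH cr Bc in \<open>auto simp: inverts_mat_def HH\<close>)
qed

end
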